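(* In the Chung–Lu random graph model with expected degree sequence $(d_1,\dots,d_n)$, let $s\neq t$ be vertices and $r\ge 1$ an integer. Then $$E[SP_r(s,t)]\ \ge\ p_{st}\left(\frac{S_2}{S}\right)^{r-1}\left(1-\frac{r(r+1)\,p_{\max}}{2}\cdot\frac{S}{S_2}\right).$$
   Context: Chung–Lu model: given $d_1,\dots,d_n>0$ with $S=\sum_{i=1}^n d_i$ and $\max_i d_i^2\le S$, the random undirected graph on $\{1,\dots,n\}$ contains each edge $\{i,j\}$ (including loops $i=j$) independently with probability $p_{ij}=d_id_j/S$. Notation: $S_2=\sum_{i=1}^n d_i^2$, $d_{\max}=\max_i d_i$, $p_{\max}=d_{\max}^2/S$. $SP_r(s,t)$ is the number of simple paths of length $r$ from $s$ to $t$, i.e. sequences $(s=b_0,b_1,\dots,b_{r-1},b_r=t)$ of pairwise distinct vertices with each $\{b_i,b_{i+1}\}$ an edge of the graph. *)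

theory Defs
  imports "HOL-Probability.Probability"
begin

definition CL_S :: "nat \<Rightarrow> (nat \<Rightarrow> real) \<Rightarrow> real" where
  "CL_S n d = (\<Sum>i<n. d i)"

definition CL_S2 :: "nat \<Rightarrow> (nat \<Rightarrow> real) \<Rightarrow> real" where
  "CL_S2 n d = (\<Sum>i<n. (d i)^2)"

definition CL_dmax :: "nat \<Rightarrow> (nat \<Rightarrow> real) \<Rightarrow> real" where
  "CL_dmax n d = Max (d ` {..<n})"

definition CL_p :: "nat \<Rightarrow> (nat \<Rightarrow> real) \<Rightarrow> nat \<Rightarrow> nat \<Rightarrow> real" where
  "CL_p n d i j = d i * d j / CL_S n d"

definition CL_pmax :: "nat \<Rightarrow> (nat \<Rightarrow> real) \<Rightarrow> real" where
  "CL_pmax n d = (CL_dmax n d)^2 / CL_S n d"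

text \<open>Edge slots: unordered pairs {i,j} (loops allowed), encoded as (i,j) with i \<le> j < n.\<close>
definition CL_slots :: "nat \<Rightarrow> (nat \<times> nat) set" where
  "CL_slots n = {(i,j). i \<le> j \<and> j < n}"

text \<open>The Chung--Lu random graph: independent Bernoulli indicator for each slot.
  A graph is a function from slots to bool (False outside the slots).\<close>
definition chung_lu :: "nat \<Rightarrow> (nat \<Rightarrow> real) \<Rightarrow> (nat \<times> nat \<Rightarrow> bool) pmf" where
  "chung_lu n d = Pi_pmf (CL_slots n) False (\<lambda>(i,j). bernoulli_pmf (CL_p n d i j))"

definition adj :: "(nat \<times> nat \<Rightarrow> bool) \<Rightarrow> nat \<Rightarrow> nat \<Rightarrow> bool" where
  "adj G i j = G (min i j, max i j)"

definition simple_paths :: "nat \<Rightarrow> (nat \<times> nat \<Rightarrow> bool) \<Rightarrow> nat \<Rightarrow> nat \<Rightarrow> nat \<Rightarrow> nat list set" where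
  "simple_paths n G r s t = {b. length b = r + 1 \<and> b ! 0 = s \<and> b ! r = t \<and> distinct b
      \<and> set b \<subseteq> {..<n} \<and> (\<forall>i<r. adj G (b ! i) (b ! (i+1)))}"

definition SP :: "nat \<Rightarrow> (nat \<times> nat \<Rightarrow> bool) \<Rightarrow> nat \<Rightarrow> nat \<Rightarrow> nat \<Rightarrow> nat" where
  "SP n G r s t = card (simple_paths n G r s t)"

end

theory Submission
  imports Defs
begin

definition Ls :: "nat \<Rightarrow> nat \<Rightarrow> nat set \<Rightarrow> nat list set" where
  "Ls n k A = {xs. length xs = k \<and> distinct xs \<and> set xs \<subseteq> {..<n} - A}"

lemma Ls_finite: "finite (Ls n k A)"
proof -
  have "Ls n k A \<subseteq> {xs. set xs \<subseteq> {..<n} \<and> length xs = k}" by (auto simp: Ls_def)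
  thus ?thesis using finite_lists_length_eq[of "{..<n}" k] finite_subset by blast
qed

lemma Ls_0: "Ls n 0 A = {[]}" by (auto simp: Ls_def)

lemma Ls_Suc: "Ls n (Suc k) A = (\<lambda>(v,xs). v#xs) ` (SIGMA v:{..<n}-A. Ls n k (insert v A))"
proof
  show "Ls n (Suc k) A \<subseteq> (\<lambda>(v,xs). v#xs) ` (SIGMA v:{..<n}-A. Ls n k (insert v A))"
  proof
    fix ys assume "ys \<in> Ls n (Suc k) A"
    then obtain v xs where "ys = v # xs" and h: "length xs = k" "distinct (v#xs)" "set (v#xs) \<subseteq> {..<n} - A"
      by (auto simp: Ls_def length_Suc_conv)
    thus "ys \<in> (\<lambda>(v,xs). v#xs) ` (SIGMA v:{..<n}-A. Ls n k (insert v A))"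
      by (auto simp: Ls_def intro!: image_eqI[where x="(v,xs)"])
  qed
qed (auto simp: Ls_def)

lemma sum_Ls_Suc: "(\<Sum>ys\<in>Ls n (Suc k) A. F ys) = (\<Sum>v\<in>{..<n}-A. \<Sum>xs\<in>Ls n k (insert v A). F (v#xs))"
proof -
  have inj: "inj_on (\<lambda>(v,xs). v#xs) (SIGMA v:{..<n}-A. Ls n k (insert v A))"
    by (auto simp: inj_on_def)
  have "(\<Sum>ys\<in>Ls n (Suc k) A. F ys) = (\<Sum>p\<in>(SIGMA v:{..<n}-A. Ls n k (insert v A)). F ((\<lambda>(v,xs). v#xs) p))"
    unfolding Ls_Suc by (rule sum.reindex[OF inj, unfolded comp_def])
  also have "\<dots> = (\<Sum>v\<in>{..<n}-A. \<Sum>xs\<in>Ls n k (insert v A). F (v#xs))"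
    by (subst sum.Sigma) (auto simp: Ls_finite split_def)
  finally show ?thesis .
qed

lemma Ls_bound:
  fixes d :: "nat \<Rightarrow> real" and D S2 :: real
  assumes S2: "S2 = (\<Sum>v<n. (d v)^2)" "S2 > 0" and D: "D \<ge> 0" "\<And>v. v < n \<Longrightarrow> (d v)^2 \<le> D"
  shows "finite A \<Longrightarrow> (\<Sum>xs\<in>Ls n k A. prod_list (map (\<lambda>x. (d x)^2) xs))
     \<ge> S2^k * (1 - (real k * real (card A) + real k * (real k - 1) / 2) * D / S2)"
proof (induction k arbitrary: A)
  case 0
  then show ?case by (simp add: Ls_0)
next
  case (Suc k)
  define a where "a = real (card A)"
  define c1 where "c1 = real k * (a + 1) + real k * (real k - 1) / 2"
  define X where "X = S2^k * (1 - c1 * D / S2)"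
  define F where "F v = (\<Sum>xs\<in>Ls n k (insert v A). prod_list (map (\<lambda>x. (d x)^2) xs))" for v
  have Fnn: "F v \<ge> 0" for v unfolding F_def
    by (intro sum_nonneg prod_list_nonneg) auto
  have FX: "F v \<ge> X" if "v \<notin> A" for v
  proof -
    have "F v \<ge> S2^k * (1 - (real k * real (card (insert v A)) + real k * (real k - 1) / 2) * D / S2)"
      unfolding F_def using Suc.IH[of "insert v A"] Suc.prems by simp
    moreover have "real (card (insert v A)) = a + 1" using that Suc.prems by (simp add: a_def)
    ultimately show ?thesis by (simp add: X_def c1_def)
  qed
  have LHS: "(\<Sum>xs\<in>Ls n (Suc k) A. prod_list (map (\<lambda>x. (d x)^2) xs)) = (\<Sum>v\<in>{..<n}-A. (d v)^2 * F v)"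
    by (simp add: sum_Ls_Suc F_def sum_distrib_left)
  define Y where "Y = (\<Sum>v\<in>{..<n}-A. (d v)^2)"
  have Ynn: "Y \<ge> 0" unfolding Y_def by (intro sum_nonneg) auto
  have Yge: "Y \<ge> S2 - a * D"
  proof -
    have "S2 = Y + (\<Sum>v\<in>{..<n}\<inter>A. (d v)^2)" unfolding S2 Y_def
      using sum.Int_Diff[of "{..<n}" "\<lambda>v. (d v)^2" A] by simp
    moreover have "(\<Sum>v\<in>{..<n}\<inter>A. (d v)^2) \<le> (\<Sum>v\<in>{..<n}\<inter>A. D)"
      by (intro sum_mono) (auto intro: D)
    moreover have "(\<Sum>v\<in>{..<n}\<inter>A. D) \<le> a * D"
      using D(1) card_mono[OF Suc.prems, of "{..<n}\<inter>A"] by (auto simp: a_def intro!: mult_right_mono)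
    ultimately show ?thesis by linarith
  qed
  have target: "real (Suc k) * real (card A) + real (Suc k) * (real (Suc k) - 1) / 2 = a + c1"
    by (simp add: c1_def a_def field_simps)
  show ?case
  proof (cases "X \<ge> 0")
    case True
    have "(\<Sum>v\<in>{..<n}-A. (d v)^2 * F v) \<ge> (\<Sum>v\<in>{..<n}-A. (d v)^2 * X)"
      by (intro sum_mono mult_left_mono FX) auto
    also have "(\<Sum>v\<in>{..<n}-A. (d v)^2 * X) = Y * X" by (simp add: Y_def sum_distrib_right)
    also have "Y * X \<ge> (S2 - a * D) * X" using True Yge by (intro mult_right_mono) auto
    finally have 1: "(\<Sum>v\<in>{..<n}-A. (d v)^2 * F v) \<ge> (S2 - a * D) * X" .
    have "(S2 - a * D) * X = S2^(Suc k) * ((1 - a * D / S2) * (1 - c1 * D / S2))"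
      using S2(2) by (simp add: X_def field_simps)
    also have "\<dots> \<ge> S2^(Suc k) * (1 - (a + c1) * D / S2)"
    proof -
      have "a * D / S2 \<ge> 0" using D S2 by (simp add: a_def)
      moreover have "1 - c1 * D / S2 \<ge> 0" using True S2(2) zero_less_power[of S2 k] unfolding X_def zero_le_mult_iff by linarith
      hence "(1 - a * D / S2) * (1 - c1 * D / S2) \<ge> 1 - (a + c1) * D / S2"
      proof -
        have c1: "c1 \<ge> 0" unfolding c1_def a_def by (cases k) auto
        have y: "c1 * D / S2 \<ge> 0" using c1 D S2 by simp
        have "(1 - a * D / S2) * (1 - c1 * D / S2) = 1 - (a * D / S2 + c1 * D / S2) + (a * D / S2) * (c1 * D / S2)"
          by (simp add: algebra_simps)
        moreover have "(a + c1) * D / S2 = a * D / S2 + c1 * D / S2" by (simp add: add_divide_distrib distrib_right)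
        moreover have "(a * D / S2) * (c1 * D / S2) \<ge> 0" using \<open>a * D / S2 \<ge> 0\<close> y by (rule mult_nonneg_nonneg)
        ultimately show ?thesis by linarith
      qed
      thus ?thesis using S2(2) by (intro mult_left_mono) auto
    qed
    finally show ?thesis using 1 LHS target by simp
  next
    case False
    hence "1 - c1 * D / S2 < 0" using S2(2) zero_less_power[of S2 k] unfolding X_def zero_le_mult_iff by linarith
    moreover have "a * D / S2 \<ge> 0" using D S2 by (simp add: a_def)
    ultimately have "1 - (a + c1) * D / S2 < 0" by (simp add: add_divide_distrib distrib_right)
    hence "S2^(Suc k) * (1 - (a + c1) * D / S2) \<le> 0" using S2(2)
      by (simp add: mult_nonneg_nonpos)
    moreover have "(\<Sum>v\<in>{..<n}-A. (d v)^2 * F v) \<ge> 0" using Fnn by (intro sum_nonneg) auto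
    ultimately show ?thesis using LHS target by simp
  qed
qed

lemma path_prod:
  fixes d :: "nat \<Rightarrow> real" and S :: real
  assumes "S \<noteq> 0"
  shows "(\<Prod>i<Suc (length xs). d ((u#xs@[t])!i) * d ((u#xs@[t])!(i+1)) / S)
    = d u * d t / S^(Suc (length xs)) * prod_list (map (\<lambda>x. (d x)^2) xs)"
proof (induction xs arbitrary: u)
  case Nil
  then show ?case by simp
next
  case (Cons x xs)
  have "(\<Prod>i<Suc (length (x#xs)). d ((u#(x#xs)@[t])!i) * d ((u#(x#xs)@[t])!(i+1)) / S)
     = (d u * d x / S) * (\<Prod>i<Suc (length xs). d ((x#xs@[t])!i) * d ((x#xs@[t])!(i+1)) / S)"
    by (subst prod.lessThan_Suc_shift) simp
  also have "\<dots> = (d u * d x / S) * (d x * d t / S^(Suc (length xs)) * prod_list (map (\<lambda>x. (d x)^2) xs))"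
    by (simp only: Cons.IH)
  also have "\<dots> = d u * d t / S^(Suc (length (x#xs))) * prod_list (map (\<lambda>x. (d x)^2) (x#xs))"
    using assms by (simp add: field_simps power2_eq_square)
  finally show ?case .
qed

lemma slot_inj:
  assumes "distinct b" "length b = r + 1"
  shows "inj_on (\<lambda>i. (min (b!i) (b!(i+1)), max (b!i) (b!(i+1)))) {..<r}"
proof (rule inj_onI)
  fix i j assume i: "i \<in> {..<r}" and j: "j \<in> {..<r}"
    and eq: "(min (b!i) (b!(i+1)), max (b!i) (b!(i+1))) = (min (b!j) (b!(j+1)), max (b!j) (b!(j+1)))"
  have inj: "\<And>x y. x < r + 1 \<Longrightarrow> y < r + 1 \<Longrightarrow> b!x = b!y \<Longrightarrow> x = y"
    using assms nth_eq_iff_index_eq[of b] by simp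
  have "b!i = b!j \<and> b!(i+1) = b!(j+1) \<or> b!i = b!(j+1) \<and> b!(i+1) = b!j"
    using eq by (auto simp: min_def max_def split: if_splits)
  thus "i = j"
  proof
    assume "b!i = b!j \<and> b!(i+1) = b!(j+1)" thus ?thesis using inj i j by auto
  next
    assume h: "b!i = b!(j+1) \<and> b!(i+1) = b!j"
    hence "i = j + 1" "i + 1 = j" using inj[of i "j+1"] inj[of "i+1" j] i j by auto
    thus ?thesis by simp
  qed
qed

lemma CL_p_sym: "CL_p n d i j = CL_p n d j i"
  by (simp add: CL_p_def mult.commute)

lemma path_prob:
  assumes p01: "\<And>i j. i < n \<Longrightarrow> j < n \<Longrightarrow> 0 \<le> CL_p n d i j \<and> CL_p n d i j \<le> 1"
    and b: "distinct b" "length b = r + 1" "set b \<subseteq> {..<n}"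
  shows "measure_pmf.prob (chung_lu n d) {G. \<forall>i<r. adj G (b!i) (b!(i+1))}
       = (\<Prod>i<r. CL_p n d (b!i) (b!(i+1)))"
proof -
  define sl where "sl i = (min (b!i) (b!(i+1)), max (b!i) (b!(i+1)))" for i
  define E where "E = sl ` {..<r}"
  have bn: "b!i < n" if "i \<le> r" for i
  proof -
    have "b!i \<in> set b" using b(2) that by (intro nth_mem) simp
    thus ?thesis using b(3) by auto
  qed
  have Esub: "E \<subseteq> CL_slots n" unfolding E_def sl_def CL_slots_def
    using bn by (auto simp: min_def max_def)
  have fin: "finite (CL_slots n)"
    by (rule finite_subset[of _ "{..<n} \<times> {..<n}"]) (auto simp: CL_slots_def)
  define B where "B e = (if e \<in> E then {True} else (UNIV :: bool set))" for e
  have ev: "{G. \<forall>i<r. adj G (b!i) (b!(i+1))} = Pi (CL_slots n) B"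
    using Esub unfolding adj_def B_def E_def sl_def Pi_def by auto
  have "measure_pmf.prob (chung_lu n d) {G. \<forall>i<r. adj G (b!i) (b!(i+1))}
      = (\<Prod>e\<in>CL_slots n. measure_pmf.prob ((\<lambda>(i,j). bernoulli_pmf (CL_p n d i j)) e) (B e))"
    unfolding ev chung_lu_def by (rule measure_Pi_pmf_Pi[OF fin])
  also have "\<dots> = (\<Prod>e\<in>E. measure_pmf.prob ((\<lambda>(i,j). bernoulli_pmf (CL_p n d i j)) e) (B e))"
    by (rule prod.mono_neutral_right[OF fin Esub]) (auto simp: B_def)
  also have "\<dots> = (\<Prod>e\<in>E. (\<lambda>(i,j). CL_p n d i j) e)"
  proof (rule prod.cong[OF refl])
    fix e assume e: "e \<in> E"
    obtain i j where ij: "e = (i,j)" by force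
    have "i < n" "j < n" using e Esub ij by (auto simp: CL_slots_def)
    thus "measure_pmf.prob ((\<lambda>(i,j). bernoulli_pmf (CL_p n d i j)) e) (B e) = (\<lambda>(i,j). CL_p n d i j) e"
      using e p01[of i j] by (simp add: ij B_def measure_pmf_single)
  qed
  also have "\<dots> = (\<Prod>i<r. (\<lambda>(i,j). CL_p n d i j) (sl i))"
  proof -
    have "inj_on sl {..<r}" unfolding sl_def using slot_inj[OF b(1,2)] .
    thus ?thesis unfolding E_def by (subst prod.reindex) auto
  qed
  also have "\<dots> = (\<Prod>i<r. CL_p n d (b!i) (b!(i+1)))"
    by (rule prod.cong[OF refl]) (auto simp: sl_def min_def max_def CL_p_sym)
  finally show ?thesis .
qed

lemma list_split3:
  assumes "length b = Suc (Suc m)"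
  shows "b = b!0 # butlast (tl b) @ [b!(Suc m)]"
proof -
  obtain x ys where b: "b = x # ys" using assms by (cases b) auto
  have ys: "ys \<noteq> []" "length ys = Suc m" using assms b by auto
  have "ys = butlast ys @ [last ys]" using ys by simp
  moreover have "last ys = ys ! m" using ys by (simp add: last_conv_nth)
  ultimately show ?thesis using b by simp
qed

lemma test_expect:
  fixes M :: "'a pmf" and P :: "'b set" and Q :: "'a \<Rightarrow> 'b \<Rightarrow> bool"
  assumes "finite P"
  shows "measure_pmf.expectation M (\<lambda>G. real (card {b\<in>P. Q G b})) = (\<Sum>b\<in>P. measure_pmf.prob M {G. Q G b})"
proof -
  have eq: "real (card {b\<in>P. Q G b}) = (\<Sum>b\<in>P. indicator {G. Q G b} G)" for G
  proof -
    have "(\<Sum>b\<in>P. (indicator {G. Q G b} G :: real)) = (\<Sum>b\<in>P. of_bool (Q G b))"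
      by (intro sum.cong refl) (simp add: indicator_def)
    also have "\<dots> = real (card (P \<inter> {b. Q G b}))" using assms by (simp add: sum_of_bool_eq)
    moreover have "{b\<in>P. Q G b} = P \<inter> {b. Q G b}" by blast
    ultimately show ?thesis by simp
  qed
  have int: "integrable (measure_pmf M) (indicator {G. Q G b} :: 'a \<Rightarrow> real)" for b
    by (rule measure_pmf.integrable_const_bound[where B=1]) (auto simp: indicator_def)
  have "measure_pmf.expectation M (\<lambda>G. \<Sum>b\<in>P. indicator {G. Q G b} G :: real) = (\<Sum>b\<in>P. measure_pmf.expectation M (indicator {G. Q G b} :: _ \<Rightarrow> real))"
    by (rule Bochner_Integration.integral_sum) (rule int)
  also have "\<dots> = (\<Sum>b\<in>P. measure_pmf.prob M {G. Q G b})"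
    by (intro sum.cong refl) (simp add: integral_indicator)
  finally show ?thesis unfolding eq .
qed

theorem lemma2:
  fixes n :: nat and d :: "nat \<Rightarrow> real" and r s t :: nat
  assumes "n \<ge> 1"
    and "\<And>i. i < n \<Longrightarrow> d i > 0"
    and "\<And>i. i < n \<Longrightarrow> (d i)^2 \<le> CL_S n d"
    and "s < n" and "t < n" and "s \<noteq> t" and "r \<ge> 1"
  shows "measure_pmf.expectation (chung_lu n d) (\<lambda>G. real (SP n G r s t))
     \<ge> CL_p n d s t * (CL_S2 n d / CL_S n d) ^ (r - 1)
         * (1 - real (r * (r + 1)) * CL_pmax n d / 2 * (CL_S n d / CL_S2 n d))"
proof -
  note dpos = assms(2)
  define S where "S = CL_S n d"
  define S2 where "S2 = CL_S2 n d"
  define dm where "dm = CL_dmax n d"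
  define D where "D = dm^2"
  have n0: "0 \<in> {..<n}" using assms(1) by auto
  have Spos: "S > 0" unfolding S_def CL_S_def
    using n0 dpos by (intro sum_pos) auto
  have S2pos: "S2 > 0" unfolding S2_def CL_S2_def
    using n0 dpos by (intro sum_pos) (auto, metis less_irrefl)
  have dm: "d v \<le> dm" if "v < n" for v
    unfolding dm_def CL_dmax_def using that by (intro Max_ge) auto
  have Dge: "(d v)^2 \<le> D" if "v < n" for v
    unfolding D_def using dm[OF that] dpos[OF that] by (intro power_mono) auto
  have D0: "D \<ge> 0" unfolding D_def by simp
  have p01: "0 \<le> CL_p n d i j \<and> CL_p n d i j \<le> 1" if "i < n" "j < n" for i j
  proof -
    have "d i * d j \<le> ((d i)^2 + (d j)^2) / 2"
      using sum_squares_ge_zero[of "d i - d j" 0] by (simp add: power2_eq_square algebra_simps)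
    also have "\<dots> \<le> S" using assms(3)[OF that(1)] assms(3)[OF that(2)] by (simp add: S_def)
    finally have "d i * d j \<le> S" .
    moreover have "d i * d j \<ge> 0" using dpos[OF that(1)] dpos[OF that(2)] by simp
    ultimately show ?thesis using Spos by (simp add: CL_p_def S_def[symmetric] divide_le_eq_1)
  qed
  define P where "P = {b. length b = r + 1 \<and> b!0 = s \<and> b!r = t \<and> distinct b \<and> set b \<subseteq> {..<n}}"
  define k where "k = r - 1"
  have rk: "r = Suc k" using assms(7) by (simp add: k_def)
  have Pimg: "P = (\<lambda>xs. s # xs @ [t]) ` Ls n k {s,t}"
  proof
    show "P \<subseteq> (\<lambda>xs. s # xs @ [t]) ` Ls n k {s,t}"
    proof
      fix b assume b: "b \<in> P"
      hence lb: "length b = Suc (Suc k)" by (simp add: P_def rk)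
      have beq: "b = s # butlast (tl b) @ [t]" using list_split3[OF lb] b by (simp add: P_def rk)
      have db: "distinct b" "set b \<subseteq> {..<n}" using b by (auto simp: P_def)
      have h1: "distinct (s # butlast (tl b) @ [t])" using db(1) beq by metis
      have h2: "set (s # butlast (tl b) @ [t]) \<subseteq> {..<n}" using db(2) beq by metis
      have "butlast (tl b) \<in> Ls n k {s,t}"
        using h1 h2 lb unfolding Ls_def by auto
      thus "b \<in> (\<lambda>xs. s # xs @ [t]) ` Ls n k {s,t}" using beq by blast
    qed
  next
    show "(\<lambda>xs. s # xs @ [t]) ` Ls n k {s,t} \<subseteq> P"
      using assms(4-6) by (auto simp: P_def Ls_def rk nth_append)
  qed
  have inj: "inj_on (\<lambda>xs. s # xs @ [t]) (Ls n k {s,t})" by (auto simp: inj_on_def)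
  have finP: "finite P" unfolding Pimg by (simp add: Ls_finite)
  have spaths: "simple_paths n G r s t = {b\<in>P. \<forall>i<r. adj G (b!i) (b!(i+1))}" for G
    by (auto simp: simple_paths_def P_def)
  have "measure_pmf.expectation (chung_lu n d) (\<lambda>G. real (SP n G r s t))
      = (\<Sum>b\<in>P. measure_pmf.prob (chung_lu n d) {G. \<forall>i<r. adj G (b!i) (b!(i+1))})"
    unfolding SP_def spaths by (rule test_expect[OF finP])
  also have "\<dots> = (\<Sum>b\<in>P. \<Prod>i<r. CL_p n d (b!i) (b!(i+1)))"
    by (intro sum.cong refl path_prob p01) (auto simp: P_def)
  also have "\<dots> = (\<Sum>xs\<in>Ls n k {s,t}. \<Prod>i<r. CL_p n d ((s # xs @ [t])!i) ((s # xs @ [t])!(i+1)))"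
    unfolding Pimg by (rule sum.reindex[OF inj, unfolded comp_def])
  also have "\<dots> = (\<Sum>xs\<in>Ls n k {s,t}. d s * d t / S^r * prod_list (map (\<lambda>x. (d x)^2) xs))"
  proof (intro sum.cong refl)
    fix xs assume "xs \<in> Ls n k {s,t}"
    hence lx: "r = Suc (length xs)" by (simp add: Ls_def rk)
    show "(\<Prod>i<r. CL_p n d ((s # xs @ [t])!i) ((s # xs @ [t])!(i+1))) = d s * d t / S^r * prod_list (map (\<lambda>x. (d x)^2) xs)"
      unfolding lx CL_p_def S_def[symmetric] using path_prod[where d=d and S=S and xs=xs and u=s and t=t] Spos by simp
  qed
  also have "\<dots> = d s * d t / S^r * (\<Sum>xs\<in>Ls n k {s,t}. prod_list (map (\<lambda>x. (d x)^2) xs))"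
    by (simp add: sum_distrib_left)
  finally have E: "measure_pmf.expectation (chung_lu n d) (\<lambda>G. real (SP n G r s t))
     = d s * d t / S^r * (\<Sum>xs\<in>Ls n k {s,t}. prod_list (map (\<lambda>x. (d x)^2) xs))" .
  have F: "(\<Sum>xs\<in>Ls n k {s,t}. prod_list (map (\<lambda>x. (d x)^2) xs))
     \<ge> S2^k * (1 - (real k * 2 + real k * (real k - 1) / 2) * D / S2)"
  proof -
    have S2eq: "S2 = (\<Sum>v<n. (d v)^2)" by (simp add: S2_def CL_S2_def)
    show ?thesis using Ls_bound[OF S2eq S2pos D0 Dge, of "{s,t}" k] assms(6) by simp
  qed
  define q where "q = d s * d t / S^r"
  have q0: "q \<ge> 0" unfolding q_def using dpos[OF assms(4)] dpos[OF assms(5)] Spos by simp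
  have c: "(real k * 2 + real k * (real k - 1) / 2) * D / S2 \<le> real (r * (r+1)) / 2 * D / S2"
  proof -
    have "real k * 2 + real k * (real k - 1) / 2 \<le> real (r * (r+1)) / 2"
      unfolding rk by (simp add: field_simps)
    thus ?thesis using D0 S2pos by (intro divide_right_mono mult_right_mono) auto
  qed
  have "measure_pmf.expectation (chung_lu n d) (\<lambda>G. real (SP n G r s t)) \<ge> q * (S2^k * (1 - (real k * 2 + real k * (real k - 1) / 2) * D / S2))"
    unfolding E q_def[symmetric] using F q0 by (rule mult_left_mono)
  moreover have "q * (S2^k * (1 - (real k * 2 + real k * (real k - 1) / 2) * D / S2))
      \<ge> q * (S2^k * (1 - real (r * (r+1)) / 2 * D / S2))"
    using c q0 S2pos by (intro mult_left_mono) auto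
  moreover have "q * (S2^k * (1 - real (r * (r+1)) / 2 * D / S2))
      = CL_p n d s t * (CL_S2 n d / CL_S n d) ^ (r - 1)
         * (1 - real (r * (r + 1)) * CL_pmax n d / 2 * (CL_S n d / CL_S2 n d))"
    unfolding q_def CL_p_def CL_pmax_def S_def[symmetric] S2_def[symmetric] dm_def[symmetric] D_def
      k_def[symmetric] using Spos S2pos by (simp add: rk field_simps)
  ultimately show ?thesis by linarith
qed

end
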